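(* Let $p$ be a prime with $p\equiv 1\pmod 6$. Then there exists a Latin square $L$ of order $p$ that is orthogonal to $B_p$ and contains an intercalate.
   Context: $B_p$ is the Latin square of order $p$ with symbol $i+j\pmod p$ in cell $(i,j)$, $i,j\in\mathbb{Z}_p$. Two Latin squares of order $p$ are orthogonal if superimposing them yields each of the $p^2$ ordered pairs of symbols exactly once. An intercalate in a Latin square $L$ is a $2\times 2$ subsquare: rows $r_1\neq r_2$ and columns $c_1\neq c_2$ such that $L(r_1,c_1)=L(r_2,c_2)$ and $L(r_1,c_2)=L(r_2,c_1)$. *)

theory Defs
  imports "HOL-Computational_Algebra.Primes"
begin

definition latin_square :: "nat \<Rightarrow> (nat \<Rightarrow> nat \<Rightarrow> nat) \<Rightarrow> bool" where
  "latin_square n L \<longleftrightarrow>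
     (\<forall>i<n. bij_betw (\<lambda>j. L i j) {0..<n} {0..<n}) \<and>
     (\<forall>j<n. bij_betw (\<lambda>i. L i j) {0..<n} {0..<n})"

definition B :: "nat \<Rightarrow> nat \<Rightarrow> nat \<Rightarrow> nat" where
  "B p i j = (i + j) mod p"

definition orthogonal :: "nat \<Rightarrow> (nat \<Rightarrow> nat \<Rightarrow> nat) \<Rightarrow> (nat \<Rightarrow> nat \<Rightarrow> nat) \<Rightarrow> bool" where
  "orthogonal n L M \<longleftrightarrow>
     bij_betw (\<lambda>(i, j). (L i j, M i j)) ({0..<n} \<times> {0..<n}) ({0..<n} \<times> {0..<n})"

definition has_intercalate :: "nat \<Rightarrow> (nat \<Rightarrow> nat \<Rightarrow> nat) \<Rightarrow> bool" where
  "has_intercalate n L \<longleftrightarrow>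
     (\<exists>r1<n. \<exists>r2<n. \<exists>c1<n. \<exists>c2<n. r1 \<noteq> r2 \<and> c1 \<noteq> c2 \<and>
        L r1 c1 = L r2 c2 \<and> L r1 c2 = L r2 c1)"

end

theory Submission imports Defs "HOL-Number_Theory.Number_Theory" begin

lemma exists_w:
  fixes p :: nat assumes "prime p" "p mod 6 = 1"
  shows "\<exists>w::int. int p dvd (w^2 + w + 1)"
proof -
  have p1: "p > 1" using assms prime_gt_1_nat by blast
  have "3 dvd p - 1" using assms(2) by presburger
  hence "card {x\<in>totatives p. ord p x = 3} = totient 3"
    using prime_card_elements_with_ord_eq_totient[OF p1 assms(1), of 3] by simp
  moreover have "totient 3 = 2" using totient_prime[of 3] by simp
  ultimately have "{x\<in>totatives p. ord p x = 3} \<noteq> {}" by (metis card.empty zero_neq_numeral)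
  then obtain x where x: "ord p x = 3" by blast
  have c3: "[x^3 = 1] (mod p)" using ord[of x p] x by simp
  have c1: "\<not> [x = 1] (mod p)" using ord_eq_Suc_0_iff[of p x] x by simp
  have "int p dvd (int x^3 - 1)" using c3
    by (metis cong_int_iff cong_iff_dvd_diff of_nat_1 of_nat_power)
  moreover have "int x^3 - 1 = (int x - 1) * (int x^2 + int x + 1)"
    by (simp add: power2_eq_square power3_eq_cube algebra_simps)
  moreover have "\<not> int p dvd (int x - 1)" using c1
    by (metis cong_int_iff cong_iff_dvd_diff of_nat_1)
  moreover have "prime (int p)" using assms(1) by simp
  ultimately have "int p dvd (int x^2 + int x + 1)" using prime_dvd_mult_iff by metis
  thus ?thesis by blast
qed

lemma bij_from_inj:
  assumes "\<forall>j<n. f j < n" "\<forall>j<n. \<forall>j'<n. f j = f j' \<longrightarrow> j = j'"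
  shows "bij_betw f {0..<n} {0..<(n::nat)}"
proof -
  have i: "inj_on f {0..<n}" using assms(2) by (auto simp: inj_on_def)
  have "f ` {0..<n} \<subseteq> {0..<n}" using assms(1) by auto
  with i have "f ` {0..<n} = {0..<n}" using endo_inj_surj by blast
  with i show ?thesis by (simp add: bij_betw_def)
qed

lemma bij_from_inj2:
  assumes "\<forall>i<n. \<forall>j<n. f (i,j) \<in> {0..<n} \<times> {0..<n}"
    "\<forall>i<n. \<forall>j<n. \<forall>i'<n. \<forall>j'<n. f (i,j) = f (i',j') \<longrightarrow> i = i' \<and> j = j'"
  shows "bij_betw f ({0..<n} \<times> {0..<n}) ({0..<n} \<times> {0..<(n::nat)})"
proof -
  have i: "inj_on f ({0..<n} \<times> {0..<n})"
  proof (rule inj_onI)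
    fix x y assume "x \<in> {0..<n} \<times> {0..<n}" "y \<in> {0..<n} \<times> {0..<n}" "f x = f y"
    then obtain a b c d where "x = (a,b)" "y = (c,d)" "a < n" "b < n" "c < n" "d < n" by auto
    moreover have "f (a,b) = f (c,d) \<longrightarrow> a = c \<and> b = d" using assms(2) \<open>a < n\<close> \<open>b < n\<close> \<open>c < n\<close> \<open>d < n\<close> by simp
    ultimately show "x = y" using \<open>f x = f y\<close> by simp
  qed
  have "f ` ({0..<n} \<times> {0..<n}) \<subseteq> {0..<n} \<times> {0..<n}"
  proof
    fix x assume "x \<in> f ` ({0..<n} \<times> {0..<n})"
    then obtain i j where "i < n" "j < n" "x = f (i,j)" by auto
    then show "x \<in> {0..<n} \<times> {0..<n}" using assms(1) by simp
  qed
  then have "f ` ({0..<n} \<times> {0..<n}) = {0..<n} \<times> {0..<n}" using endo_inj_surj[OF _ _ i] by simp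
  with i show ?thesis by (simp add: bij_betw_def)
qed

definition L7 :: "nat \<Rightarrow> nat \<Rightarrow> nat" where
  "L7 i j = [[0, 2, 1, 3, 4, 5, 6], [1, 3, 0, 5, 6, 2, 4], [4, 6, 2, 1, 0, 3, 5], [5, 0, 3, 4, 1, 6, 2],
     [6, 4, 5, 2, 3, 0, 1], [2, 1, 6, 0, 5, 4, 3], [3, 5, 4, 6, 2, 1, 0]] ! i ! j"

lemma L7_lt_all: "\<forall>i\<in>set [0..<7]. \<forall>j\<in>set [0..<7]. L7 i j < 7"
  by code_simp

lemma L7_lt: "i < 7 \<Longrightarrow> j < 7 \<Longrightarrow> L7 i j < 7"
  using L7_lt_all by simp

lemma seven: "latin_square 7 L7 \<and> orthogonal 7 L7 (B 7) \<and> has_intercalate 7 L7"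
proof -
  have r: "\<forall>i\<in>set [0..<7]. distinct (map (L7 i) [0..<7])"
    by code_simp
  have c: "\<forall>j\<in>set [0..<7]. distinct (map (\<lambda>i. L7 i j) [0..<7])"
    by code_simp
  have o: "distinct (map (\<lambda>(i,j). (L7 i j, B 7 i j)) (List.product [0..<7] [0..<7]))"
    by code_simp
  have rr: "\<forall>i<7. bij_betw (\<lambda>j. L7 i j) {0..<7} {0..<7}"
  proof (intro allI impI, rule bij_from_inj)
    fix i :: nat assume "i < 7"
    then have d: "distinct (map (L7 i) [0..<7])" using r by simp
    have "inj_on (L7 i) (set [0..<7])" using distinct_map[THEN iffD1, OF d] by (rule conjunct2)
    then have inj: "inj_on (L7 i) {0..<7}" by (simp only: set_upt)
    show "\<forall>j<7. L7 i j < 7" using L7_lt \<open>i < 7\<close> by blast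
    show "\<forall>j<7. \<forall>j'<7. L7 i j = L7 i j' \<longrightarrow> j = j'"
      using inj unfolding inj_on_def by simp
  qed
  have cc: "\<forall>j<7. bij_betw (\<lambda>i. L7 i j) {0..<7} {0..<7}"
  proof (intro allI impI, rule bij_from_inj)
    fix j :: nat assume j: "j < 7"
    then have "distinct (map (\<lambda>i. L7 i j) [0..<7])" using c by simp
    then have "inj_on (\<lambda>i. L7 i j) (set [0..<7])" using distinct_map by blast
    then have inj: "inj_on (\<lambda>i. L7 i j) {0..<7}" by (simp only: set_upt)
    show "\<forall>i<7. L7 i j < 7" using L7_lt j by blast
    show "\<forall>i<7. \<forall>i'<7. L7 i j = L7 i' j \<longrightarrow> i = i'"
      using inj unfolding inj_on_def by simp
  qed
  have oo: "orthogonal 7 L7 (B 7)"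
    unfolding orthogonal_def
  proof (rule bij_from_inj2)
    show "\<forall>i<7. \<forall>j<7. (\<lambda>(i, j). (L7 i j, B 7 i j)) (i, j) \<in> {0..<7} \<times> {0..<7}"
    proof (intro allI impI)
      fix i j :: nat assume h: "i < 7" "j < 7"
      have "L7 i j < 7" by (rule L7_lt[OF h])
      moreover have "B 7 i j < 7" unfolding B_def by (rule mod_less_divisor) simp
      ultimately show "(\<lambda>(i, j). (L7 i j, B 7 i j)) (i, j) \<in> {0..<7} \<times> {0..<7}" by simp
    qed
    show "\<forall>i<7. \<forall>j<7. \<forall>i'<7. \<forall>j'<7. (\<lambda>(i, j). (L7 i j, B 7 i j)) (i, j) = (\<lambda>(i, j). (L7 i j, B 7 i j)) (i', j') \<longrightarrow> i = i' \<and> j = j'"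
    proof -
      have "inj_on (\<lambda>(i, j). (L7 i j, B 7 i j)) (set (List.product [0..<7] [0..<7]))"
        using distinct_map[THEN iffD1, OF o] by blast
      then have "inj_on (\<lambda>(i, j). (L7 i j, B 7 i j)) ({0..<7} \<times> {0..<7})"
        by (simp only: set_product set_upt)
      then show ?thesis
      proof (intro allI impI)
        fix i j i' j' :: nat
        assume I: "inj_on (\<lambda>(i, j). (L7 i j, B 7 i j)) ({0..<7} \<times> {0..<7})"
          and h: "i < 7" "j < 7" "i' < 7" "j' < 7"
          and e: "(\<lambda>(i, j). (L7 i j, B 7 i j)) (i, j) = (\<lambda>(i, j). (L7 i j, B 7 i j)) (i', j')"
        have "(i, j) = (i', j')" by (rule inj_onD[OF I e]) (use h in auto)
        then show "i = i' \<and> j = j'" by simp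
      qed
    qed
  qed
  have "has_intercalate 7 L7" unfolding has_intercalate_def
    by (rule exI[of _ 0], simp, rule exI[of _ 1], simp, rule exI[of _ 0], simp,
        rule exI[of _ 2], simp add: L7_def)
  with rr cc oo show ?thesis by (simp add: latin_square_def)
qed

context
  fixes p :: nat and w :: int
  assumes pr: "prime p" and W: "int p dvd (w^2 + w + 1)" and big: "p > 7"
begin

definition inS :: "int \<Rightarrow> bool" where "inS x \<longleftrightarrow> [x^6 = 1] (mod int p)"
definition g :: "int \<Rightarrow> int" where "g x = (if inS x then -(w^2)*x else -w*x)"
definition LL :: "nat \<Rightarrow> nat \<Rightarrow> nat" where "LL i j = nat ((g (int j - int i) + int i) mod int p)"

lemma E: "int p dvd (w^3 - 1)"
proof -
  have "w^3 - 1 = (w - 1) * (w^2 + w + 1)" by (simp add: power2_eq_square power3_eq_cube algebra_simps)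
  thus ?thesis using W by simp
qed

lemma w6: "int p dvd (w^6 - 1)"
proof -
  have "w^6 - 1 = (w^3 + 1) * (w^3 - 1)" by (simp add: eval_nat_numeral algebra_simps)
  thus ?thesis using E by simp
qed

lemma primeP: "prime (int p)" using pr by simp

lemma notdvd3: "\<not> int p dvd 3"
proof
  assume "int p dvd 3"
  then have "int p \<le> 3" by (rule zdvd_imp_le) simp
  with big show False by simp
qed

lemma notdvd2: "\<not> int p dvd 2"
proof
  assume "int p dvd 2"
  then have "int p \<le> 2" by (rule zdvd_imp_le) simp
  with big show False by simp
qed

lemma cancel3: "int p dvd (3 * a) \<Longrightarrow> int p dvd a"
  using primeP notdvd3 prime_dvd_mult_iff by blast

lemma cancel2: "int p dvd (2 * a) \<Longrightarrow> int p dvd a"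
  using primeP notdvd2 prime_dvd_mult_iff by blast

lemma S_transfer:
  assumes "int p dvd (y - u*x)" "int p dvd (u^6 - 1)"
  shows "inS y \<longleftrightarrow> inS x"
proof -
  have "[y = u*x] (mod int p)" using assms(1) by (simp add: cong_iff_dvd_diff)
  then have a: "[y^6 = (u*x)^6] (mod int p)" by (rule cong_pow)
  have "[u^6 = 1] (mod int p)" using assms(2) by (simp add: cong_iff_dvd_diff)
  then have "[u^6 * x^6 = 1 * x^6] (mod int p)" by (rule cong_mult) simp
  then have "[(u*x)^6 = x^6] (mod int p)" by (simp add: power_mult_distrib)
  with a have "[y^6 = x^6] (mod int p)" by (rule cong_trans)
  then show ?thesis unfolding inS_def using cong_trans cong_sym by meson
qed

lemma S_w: "int p dvd (y - w*x) \<Longrightarrow> inS y \<longleftrightarrow> inS x"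
  using S_transfer w6 by blast

lemma S_neg: "int p dvd (y + x) \<Longrightarrow> inS y \<longleftrightarrow> inS x"
  using S_transfer[of y "-1" x] by simp

lemma S_1: "int p dvd (y - x) \<Longrightarrow> inS y \<longleftrightarrow> inS x"
  using S_transfer[of y 1 x] by simp

lemma comb: "(P::int) dvd D \<Longrightarrow> P dvd E \<Longrightarrow> P dvd F \<Longrightarrow> T = a*D + b*E + c*F \<Longrightarrow> P dvd T"
  by simp

lemma g_cong: "int p dvd (x - y) \<Longrightarrow> int p dvd (g x - g y)"
proof -
  assume d: "int p dvd (x - y)"
  then have s: "inS x \<longleftrightarrow> inS y" by (rule S_1)
  show ?thesis
  proof (cases "inS x")
    case True
    then have "g x - g y = -(w^2) * (x - y)" using s by (simp add: g_def algebra_simps)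
    then show ?thesis using d by simp
  next
    case False
    then have "g x - g y = -w * (x - y)" using s by (simp add: g_def algebra_simps)
    then show ?thesis using d by simp
  qed
qed

lemma gT: "inS x \<Longrightarrow> g x = -(w^2)*x" by (simp add: g_def)
lemma gF: "\<not> inS x \<Longrightarrow> g x = -w*x" by (simp add: g_def)

lemma g_mixed: assumes "inS x" "\<not> inS y" "int p dvd (g x - g y)" shows False
proof -
  have D: "int p dvd (-(w^2)*x - (-w*y))" using assms by (simp add: gT gF)
  have "int p dvd (y - w*x)"
    by (rule comb[OF D E W, where a="w^2" and b="-y + w*x" and c=0]) (simp add: eval_nat_numeral algebra_simps)
  then have "inS y \<longleftrightarrow> inS x" by (rule S_w)
  with assms show False by simp
qed

lemma g_inj: assumes "int p dvd (g x - g y)" shows "int p dvd (x - y)"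
proof (cases "inS x"; cases "inS y")
  assume a: "inS x" "inS y"
  have D: "int p dvd (-(w^2)*x - (-(w^2)*y))" using assms a by (simp add: gT gF)
  show ?thesis
    by (rule comb[OF D E W, where a="-w" and b="y - x" and c=0]) (simp add: eval_nat_numeral algebra_simps)
next
  assume a: "\<not> inS x" "\<not> inS y"
  have D: "int p dvd (-w*x - (-w*y))" using assms a by (simp add: gT gF)
  show ?thesis
    by (rule comb[OF D E W, where a="-(w^2)" and b="y - x" and c=0]) (simp add: eval_nat_numeral algebra_simps)
next
  assume a: "inS x" "\<not> inS y"
  then show ?thesis using g_mixed assms by blast
next
  assume a: "\<not> inS x" "inS y"
  have "int p dvd (g y - g x)" using assms by (simp add: dvd_diff_commute)
  then show ?thesis using g_mixed a by blast
qed

lemma h_mixed: assumes "inS x" "\<not> inS y" "int p dvd ((g x - x) - (g y - y))" shows False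
proof -
  have D: "int p dvd ((-(w^2)*x - x) - (-w*y - y))" using assms by (simp add: gT gF)
  have "int p dvd (x - w*y)"
    by (rule comb[OF D E W, where a="w^2" and b="-x + w*y" and c="w^2*x - w^2*y"]) (simp add: eval_nat_numeral algebra_simps)
  then have "inS x \<longleftrightarrow> inS y" by (rule S_w)
  with assms show False by simp
qed

lemma h_inj: assumes "int p dvd ((g x - x) - (g y - y))" shows "int p dvd (x - y)"
proof (cases "inS x"; cases "inS y")
  assume a: "inS x" "inS y"
  have D: "int p dvd ((-(w^2)*x - x) - (-(w^2)*y - y))" using assms a by (simp add: gT gF)
  show ?thesis
    by (rule comb[OF D E W, where a="w^2" and b="-(x - y)" and c="w^2*(x-y)"]) (simp add: eval_nat_numeral algebra_simps)
next
  assume a: "\<not> inS x" "\<not> inS y"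
  have D: "int p dvd ((-w*x - x) - (-w*y - y))" using assms a by (simp add: gT gF)
  show ?thesis
    by (rule comb[OF D E W, where a="w" and b="-(x - y)" and c="w*(x-y)"]) (simp add: eval_nat_numeral algebra_simps)
next
  assume a: "inS x" "\<not> inS y"
  then show ?thesis using h_mixed assms by blast
next
  assume a: "\<not> inS x" "inS y"
  have "int p dvd ((g y - y) - (g x - x))" using assms by (simp add: dvd_diff_commute)
  then show ?thesis using h_mixed a by blast
qed

lemma k_mixed: assumes "inS x" "\<not> inS y" "int p dvd ((2*g x - x) - (2*g y - y))" shows False
proof -
  have D: "int p dvd ((2*(-(w^2)*x) - x) - (2*(-w*y) - y))" using assms by (simp add: gT gF)
  have "int p dvd (3*(x + y))"
    by (rule comb[OF D E W, where a="-2*w-1" and b="-4*x" and c="-2*x + 4*y"]) (simp add: eval_nat_numeral algebra_simps)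
  then have "int p dvd (x + y)" by (rule cancel3)
  then have "inS x \<longleftrightarrow> inS y" by (rule S_neg)
  with assms show False by simp
qed

lemma k_inj: assumes "int p dvd ((2*g x - x) - (2*g y - y))" shows "int p dvd (x - y)"
proof (cases "inS x"; cases "inS y")
  assume a: "inS x" "inS y"
  have D: "int p dvd ((2*(-(w^2)*x) - x) - (2*(-(w^2)*y) - y))" using assms a by (simp add: gT gF)
  have "int p dvd (3*(x - y))"
    by (rule comb[OF D E W, where a="-2*w-1" and b="-4*(x-y)" and c="-2*(x-y)"]) (simp add: eval_nat_numeral algebra_simps)
  then show ?thesis by (rule cancel3)
next
  assume a: "\<not> inS x" "\<not> inS y"
  have D: "int p dvd ((2*(-w*x) - x) - (2*(-w*y) - y))" using assms a by (simp add: gT gF)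
  have "int p dvd (3*(x - y))"
    by (rule comb[OF D E W, where a="-2*w^2-1" and b="-4*(x-y)" and c="-2*(x-y)"]) (simp add: eval_nat_numeral algebra_simps)
  then show ?thesis by (rule cancel3)
next
  assume a: "inS x" "\<not> inS y"
  then show ?thesis using k_mixed assms by blast
next
  assume a: "\<not> inS x" "inS y"
  have "int p dvd ((2*g y - y) - (2*g x - x))" using assms by (simp add: dvd_diff_commute)
  then show ?thesis using k_mixed a by blast
qed

lemma Ppos: "int p > 0" using big by simp

lemma nat_mod_lt: "nat (a mod int p) < p"
  using Ppos by (simp add: nat_less_iff)

lemma nat_mod_eq: "nat (a mod int p) = nat (b mod int p) \<Longrightarrow> int p dvd (a - b)"
proof -
  assume "nat (a mod int p) = nat (b mod int p)"
  then have "a mod int p = b mod int p" using Ppos by (simp add: eq_nat_nat_iff)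
  then show ?thesis by (simp add: mod_eq_dvd_iff)
qed

lemma dvd_mod_self: "int p dvd (a mod int p - a)"
  using mod_eq_dvd_iff[of "a mod int p" "int p" a] by simp

lemma eq_of_dvd: "i < p \<Longrightarrow> j < p \<Longrightarrow> int p dvd (int i - int j) \<Longrightarrow> i = j"
  using cong_less_imp_eq_int[of "int i" "int p" "int j"] by (simp add: cong_iff_dvd_diff)

lemma LL_lt: "LL i j < p" unfolding LL_def by (rule nat_mod_lt)

lemma rows: "bij_betw (\<lambda>j. LL i j) {0..<p} {0..<p}"
proof (rule bij_from_inj)
  show "\<forall>j<p. LL i j < p" using LL_lt by blast
  show "\<forall>j<p. \<forall>j'<p. LL i j = LL i j' \<longrightarrow> j = j'"
  proof (intro allI impI)
    fix j j' assume h: "j < p" "j' < p" "LL i j = LL i j'"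
    have "int p dvd ((g (int j - int i) + int i) - (g (int j' - int i) + int i))"
      using h(3) unfolding LL_def by (rule nat_mod_eq)
    then have "int p dvd (g (int j - int i) - g (int j' - int i))" by simp
    then have "int p dvd ((int j - int i) - (int j' - int i))" by (rule g_inj)
    then have "int p dvd (int j - int j')" by simp
    then show "j = j'" using h eq_of_dvd by blast
  qed
qed

lemma cols: "bij_betw (\<lambda>i. LL i j) {0..<p} {0..<p}"
proof (rule bij_from_inj)
  show "\<forall>i<p. LL i j < p" using LL_lt by blast
  show "\<forall>i<p. \<forall>i'<p. LL i j = LL i' j \<longrightarrow> i = i'"
  proof (intro allI impI)
    fix i i' assume h: "i < p" "i' < p" "LL i j = LL i' j"
    have "int p dvd ((g (int j - int i) + int i) - (g (int j - int i') + int i'))"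
      using h(3) unfolding LL_def by (rule nat_mod_eq)
    moreover have "(g (int j - int i) + int i) - (g (int j - int i') + int i')
       = (g (int j - int i) - (int j - int i)) - (g (int j - int i') - (int j - int i'))" by simp
    ultimately have "int p dvd ((int j - int i) - (int j - int i'))" using h_inj by metis
    then have "int p dvd (int i' - int i)" by simp
    then show "i = i'" using h eq_of_dvd by (metis dvd_diff_commute)
  qed
qed

lemma orth: "orthogonal p LL (B p)"
  unfolding orthogonal_def
proof (rule bij_from_inj2)
  show "\<forall>i<p. \<forall>j<p. (\<lambda>(i, j). (LL i j, B p i j)) (i, j) \<in> {0..<p} \<times> {0..<p}"
  proof (intro allI impI)
    fix i j :: nat
    have "LL i j < p" by (rule LL_lt)
    moreover have "B p i j < p" unfolding B_def using big by simp
    ultimately show "(\<lambda>(i, j). (LL i j, B p i j)) (i, j) \<in> {0..<p} \<times> {0..<p}" by simp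
  qed
  show "\<forall>i<p. \<forall>j<p. \<forall>i'<p. \<forall>j'<p. (\<lambda>(i, j). (LL i j, B p i j)) (i, j) = (\<lambda>(i, j). (LL i j, B p i j)) (i', j') \<longrightarrow> i = i' \<and> j = j'"
  proof (intro allI impI)
    fix i j i' j' :: nat
    assume h: "i < p" "j < p" "i' < p" "j' < p"
      and e: "(\<lambda>(i, j). (LL i j, B p i j)) (i, j) = (\<lambda>(i, j). (LL i j, B p i j)) (i', j')"
    from e have e1: "LL i j = LL i' j'" and e2: "(i + j) mod p = (i' + j') mod p" by (simp_all add: B_def)
    have D1: "int p dvd ((g (int j - int i) + int i) - (g (int j' - int i') + int i'))"
      using e1 unfolding LL_def by (rule nat_mod_eq)
    have "int ((i + j) mod p) = int ((i' + j') mod p)" using e2 by simp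
    then have "(int i + int j) mod int p = (int i' + int j') mod int p" by (simp add: of_nat_mod)
    then have D2: "int p dvd ((int i + int j) - (int i' + int j'))" by (simp add: mod_eq_dvd_iff)
    have "int p dvd ((2 * g (int j - int i) - (int j - int i)) - (2 * g (int j' - int i') - (int j' - int i')))"
      by (rule comb[OF D1 D2 D2, where a=2 and b="-1" and c=0]) (simp add: algebra_simps)
    then have D3: "int p dvd ((int j - int i) - (int j' - int i'))" by (rule k_inj)
    have "int p dvd (2 * (int j - int j'))"
      by (rule comb[OF D3 D2 D2, where a=1 and b=1 and c=0]) (simp add: algebra_simps)
    then have dj: "int p dvd (int j - int j')" by (rule cancel2)
    then have "j = j'" using h eq_of_dvd by blast
    moreover have "int p dvd (int i - int i')" using D2 dj \<open>j = j'\<close> by simp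
    then have "i = i'" using h eq_of_dvd by blast
    ultimately show "i = i' \<and> j = j'" by simp
  qed
qed

lemma not_dvd_w: "\<not> int p dvd w"
proof
  assume "int p dvd w"
  then have "int p dvd (w^2 + w + 1 - w * (w + 1))" using W by (simp add: dvd_diff)
  then have "int p dvd 1" by (simp add: power2_eq_square algebra_simps)
  then show False using primeP by (simp add: prime_int_iff)
qed

lemma not_dvd_w1: "\<not> int p dvd (w - 1)"
proof
  assume a: "int p dvd (w - 1)"
  have "int p dvd 3"
    by (rule comb[OF W a a, where a=1 and b="-(w+2)" and c=0]) (simp add: power2_eq_square algebra_simps)
  then show False using notdvd3 by simp
qed

lemma inS1: "inS 1" by (simp add: inS_def)

lemma inSw: "inS w" using S_w[of w 1] inS1 by simp

lemma inSw2: "inS (w^2)"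
proof -
  have "int p dvd ((w^2)^6 - 1)"
    by (rule comb[OF w6 w6 w6, where a="w^6 + 1" and b=0 and c=0]) (simp add: eval_nat_numeral algebra_simps)
  then have "inS (w^2) \<longleftrightarrow> inS 1" using S_transfer[of "w^2" "w^2" 1] by simp
  then show ?thesis using inS1 by simp
qed

lemma not_inS2: "\<not> inS 2"
proof
  assume "inS 2"
  then have "int p dvd (3 * 3 * 7)" by (simp add: inS_def cong_iff_dvd_diff)
  then have "int p dvd 3 \<or> int p dvd 7" using primeP prime_dvd_mult_iff by metis
  moreover have "\<not> int p dvd 7"
  proof
    assume "int p dvd 7"
    then have "int p \<le> 7" by (rule zdvd_imp_le) simp
    with big show False by simp
  qed
  ultimately show False using notdvd3 by blast
qed

lemma not_inS_q: "\<not> inS (1 - w + w^2)"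
proof -
  have a: "int p dvd ((1 - w + w^2) - (-w) * 2)"
    by (rule comb[OF W W W, where a=1 and b=0 and c=0]) (simp add: algebra_simps)
  have b: "int p dvd ((-w)^6 - 1)" using w6 by simp
  show ?thesis using S_transfer[OF a b] not_inS2 by simp
qed

lemma intercal: "has_intercalate p LL"
proof -
  define r2 where "r2 = nat ((w - w^2) mod int p)"
  define c2 where "c2 = nat (w mod int p)"
  have ir2: "int r2 = (w - w^2) mod int p" unfolding r2_def using Ppos by simp
  have ic2: "int c2 = w mod int p" unfolding c2_def using Ppos by simp
  have B1: "int p dvd (int r2 - (w - w^2))" unfolding ir2 by (rule dvd_mod_self)
  have B2: "int p dvd (int c2 - w)" unfolding ic2 by (rule dvd_mod_self)
  have r2p: "r2 < p" unfolding r2_def by (rule nat_mod_lt)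
  have c2p: "c2 < p" unfolding c2_def by (rule nat_mod_lt)
  have r2ne: "0 \<noteq> r2"
  proof
    assume "0 = r2"
    then have "int p dvd (w - w^2)" using B1 by (simp add: dvd_diff_commute)
    moreover have "w - w^2 = w * (1 - w)" by (simp add: power2_eq_square algebra_simps)
    ultimately have "int p dvd (w * (1 - w))" by simp
    then have "int p dvd w \<or> int p dvd (1 - w)" using primeP prime_dvd_mult_iff by blast
    then show False using not_dvd_w not_dvd_w1 by (simp add: dvd_diff_commute)
  qed
  have c2ne: "1 \<noteq> c2"
  proof
    assume h: "1 = c2"
    have "int p dvd (int c2 - w)" by (rule B2)
    then have "int p dvd (1 - w)" unfolding h[symmetric] by simp
    then show False using not_dvd_w1 by (simp add: dvd_diff_commute)
  qed
  have eq1: "LL 0 1 = LL r2 c2"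
  proof -
    have "int p dvd ((int c2 - int r2) - w^2)"
      by (rule comb[OF B2 B1 B1, where a=1 and b="-1" and c=0]) (simp add: algebra_simps)
    then have A: "int p dvd (g (int c2 - int r2) - g (w^2))" by (rule g_cong)
    have "int p dvd ((g 1 + 0) - (g (int c2 - int r2) + int r2))"
      by (rule comb[OF A B1 E, where a="-1" and b="-1" and c=w])
        (simp only: gT[OF inS1] gT[OF inSw2], simp add: eval_nat_numeral algebra_simps)
    then have "(g 1 + 0) mod int p = (g (int c2 - int r2) + int r2) mod int p"
      by (simp add: mod_eq_dvd_iff)
    then show ?thesis unfolding LL_def by simp
  qed
  have eq2: "LL 0 c2 = LL r2 1"
  proof -
    have A1: "int p dvd (g (int c2) - g w)" using B2 by (rule g_cong)
    have "int p dvd ((1 - int r2) - (1 - w + w^2))"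
      by (rule comb[OF B1 B1 B1, where a="-1" and b=0 and c=0]) (simp add: algebra_simps)
    then have A2: "int p dvd (g (1 - int r2) - g (1 - w + w^2))" by (rule g_cong)
    have "int p dvd ((g (int c2) + 0) - (g (1 - int r2) + int r2))"
      by (rule comb[OF A1 A2 B1, where a=1 and b="-1" and c="-1"])
        (simp only: gT[OF inSw] gF[OF not_inS_q], simp add: eval_nat_numeral algebra_simps)
    then have "(g (int c2 - int 0) + int 0) mod int p = (g (int 1 - int r2) + int r2) mod int p"
      by (simp add: mod_eq_dvd_iff)
    then show ?thesis unfolding LL_def by simp
  qed
  show ?thesis unfolding has_intercalate_def
  proof -
    have "(0::nat) < p" "(1::nat) < p" using big by simp_all
    then show "\<exists>r1<p. \<exists>r2<p. \<exists>c1<p. \<exists>c2<p. r1 \<noteq> r2 \<and> c1 \<noteq> c2 \<and> LL r1 c1 = LL r2 c2 \<and> LL r1 c2 = LL r2 c1"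
      using r2p c2p r2ne c2ne eq1 eq2 by blast
  qed
qed

lemma general: "latin_square p LL \<and> orthogonal p LL (B p) \<and> has_intercalate p LL"
  using rows cols orth intercal by (simp add: latin_square_def)

end

theorem theorem7p1:
  fixes p :: nat
  assumes "prime p" and "p mod 6 = 1"
  shows "\<exists>L. latin_square p L \<and> orthogonal p L (B p) \<and> has_intercalate p L"
proof -
  obtain w where W: "int p dvd (w^2 + w + 1)" using exists_w assms by blast
  show ?thesis
  proof (cases "p = 7")
    case True
    then show ?thesis using seven by blast
  next
    case False
    have "p > 1" using assms(1) prime_gt_1_nat by blast
    then have "p > 7" using assms(2) False by presburger
    then show ?thesis using general[OF assms(1) W] by blast
  qed
qed

end
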